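(* For every $d\in\mathbb N$ and every subset $A\subseteq\mathbb R^d$, one has $\operatorname{ch}A=\operatorname{conv}A$; equivalently, every convex subset of $\mathbb R^d$ is a Choquet set.
   Context: Let $V$ be a Banach space (here $V=\mathbb R^d$) with Borel $\sigma$-algebra $\mathcal B(V)$ and dual $V^*$. A Borel probability measure $\mu$ on $V$ has a barycenter if there is $y\in V$ with $L(y)=\int_V L(x)\,\mu(dx)$ for all $L\in V^*$; this $y$ is unique and is denoted $r(\mu)=\int_V x\,\mu(dx)$. For a Borel set $A\subseteq V$, $\mathcal M(A)$ is the set of regular Borel probability measures $\mu$ on $V$ with $\mu(A)=1$ that have a barycenter; for an arbitrary $A\subseteq V$, $\mathcal M(A)=\bigcup\{\mathcal M(B): B\subseteq A,\ B\in\mathcal B(V)\}$. A point $r(\mu)$ with $\mu\in\mathcal M(A)$ is a Choquet combination of points of $A$. $A$ is a Choquet set if $r(\mu)\in A$ for every $\mu\in\mathcal M(A)$. The Choquet hull $\operatorname{ch}A$ is the intersection of all Choquet sets containing $A$ (the smallest Choquet set containing $A$). *)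

theory Defs
  imports "HOL-Analysis.Analysis"
begin

definition has_barycenter :: "'a::real_normed_vector measure \<Rightarrow> 'a \<Rightarrow> bool" where
  "has_barycenter M y \<longleftrightarrow>
     (\<forall>L::'a \<Rightarrow> real. bounded_linear L \<longrightarrow> integrable M L \<and> L y = (\<integral>x. L x \<partial>M))"

definition barycenter :: "'a::real_normed_vector measure \<Rightarrow> 'a" where
  "barycenter M = (THE y. has_barycenter M y)"

definition regular_measure :: "'a::topological_space measure \<Rightarrow> bool" where
  "regular_measure M \<longleftrightarrow>
     (\<forall>B\<in>sets borel.
        emeasure M B = (SUP K\<in>{K. compact K \<and> K \<subseteq> B}. emeasure M K) \<and>
        emeasure M B = (INF U\<in>{U. open U \<and> B \<subseteq> U}. emeasure M U))"

definition choquet_measures :: "'a::real_normed_vector set \<Rightarrow> 'a measure set" where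
  "choquet_measures A =
     {M. sets M = sets borel \<and> emeasure M (space M) = 1 \<and> regular_measure M \<and>
         (\<exists>B\<in>sets borel. B \<subseteq> A \<and> emeasure M B = 1) \<and>
         (\<exists>y. has_barycenter M y)}"

definition choquet_set :: "'a::real_normed_vector set \<Rightarrow> bool" where
  "choquet_set A \<longleftrightarrow> (\<forall>M\<in>choquet_measures A. barycenter M \<in> A)"

definition choquet_hull :: "'a::real_normed_vector set \<Rightarrow> 'a set" where
  "choquet_hull A = \<Inter>{C. choquet_set C \<and> A \<subseteq> C}"

end

theory Submission
  imports Defs "HOL-Probability.Probability"
begin


lemma bary_in_convex_aux:
  fixes C :: "'a::euclidean_space set"
  shows "\<And>C B. nat (aff_dim C + 1) = n \<Longrightarrow> convex C \<Longrightarrow> sets M = sets borel \<Longrightarrow> emeasure M (space M) = 1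
    \<Longrightarrow> B \<in> sets borel \<Longrightarrow> B \<subseteq> C \<Longrightarrow> emeasure M B = 1 \<Longrightarrow> has_barycenter M y \<Longrightarrow> y \<in> (C::'a set)"
proof (induction n rule: less_induct)
  case (less n C B)
  interpret prob_space M by (rule prob_spaceI) (use less(5) in simp)
  have Bev: "B \<in> events" using less(4,6) by simp
  have "prob B = 1" using less(8) by (simp add: emeasure_eq_measure)
  hence AEB: "AE x in M. x \<in> B" using AE_in_set_eq_1[OF Bev] by simp
  have bary: "\<And>a. integrable M (\<lambda>x. a \<bullet> x) \<and> a \<bullet> y = (\<integral>x. a \<bullet> x \<partial>M)"
    using less(9) unfolding has_barycenter_def using bounded_linear_inner_right by blast
  show ?case
  proof (rule ccontr)
    assume yC: "y \<notin> C"
    show False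
    proof (cases "y \<in> closure C")
      case False
      obtain a b where ab: "a \<bullet> y < b" "\<forall>x\<in>closure C. a \<bullet> x > b"
        using separating_hyperplane_closed_point[OF convex_closure[OF less(3)] closed_closure False] by blast
      have "AE x in M. b \<le> a \<bullet> x"
        using AEB proof eventually_elim
        case (elim x) then show ?case using ab less(7) closure_subset by (meson in_mono less_imp_le)
      qed
      hence "b \<le> (\<integral>x. a \<bullet> x \<partial>M)" using integral_ge_const bary by blast
      with bary ab show False by simp
    next
      case True
      have yri: "y \<notin> rel_interior C" using yC rel_interior_subset by blast
      obtain a where a: "a \<noteq> 0" "\<And>z. z \<in> closure C \<Longrightarrow> a \<bullet> y \<le> a \<bullet> z"
        "\<And>z. z \<in> rel_interior C \<Longrightarrow> a \<bullet> y < a \<bullet> z"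
        using supporting_hyperplane_relative_frontier[OF less(3) True yri] by blast
      have Bne: "B \<noteq> {}" using less(8) by auto
      hence Cne: "C \<noteq> {}" using less(7) by auto
      then obtain z where z: "z \<in> rel_interior C" using rel_interior_eq_empty[OF less(3)] by blast
      define H where "H = {x. a \<bullet> x = a \<bullet> y}"
      have AEge: "AE x in M. 0 \<le> a \<bullet> x - a \<bullet> y"
        using AEB proof eventually_elim
        case (elim x) then show ?case using a(2) less(7) closure_subset by force
      qed
      have int: "integrable M (\<lambda>x. a \<bullet> x - a \<bullet> y)" using bary by auto
      have "(\<integral>x. a \<bullet> x - a \<bullet> y \<partial>M) = 0"
        using bary[of a] by (simp add: prob_space)
      hence "AE x in M. a \<bullet> x - a \<bullet> y = 0" using integral_nonneg_eq_0_iff_AE[OF int AEge] by simp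
      hence AEBH: "AE x in M. x \<in> B \<inter> H" using AEB unfolding H_def by eventually_elim auto
      have Hb: "H \<in> sets borel" unfolding H_def by (rule borel_closed) (rule closed_hyperplane)
      have BHb: "B \<inter> H \<in> sets borel" using Hb less(6) by auto
      have "prob (B \<inter> H) = 1" using AE_in_set_eq_1[of "B \<inter> H"] BHb less(4) AEBH by simp
      hence em: "emeasure M (B \<inter> H) = 1" by (simp add: emeasure_eq_measure)
      have face: "(C \<inter> H) face_of C"
        unfolding H_def using exposed_face_of_Int_supporting_hyperplane_ge[OF less(3), where a=a and b="a \<bullet> y"]
          a(2) closure_subset exposed_face_of_def by blast
      have "z \<notin> C \<inter> H" using a(3)[OF z] unfolding H_def by auto
      moreover have "z \<in> C" using z rel_interior_subset by blast
      ultimately have "C \<inter> H \<noteq> C" by blast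
      hence lt: "aff_dim (C \<inter> H) < aff_dim C" using face_of_aff_dim_lt[OF less(3) face] by blast
      have "aff_dim (C \<inter> H) \<ge> -1" by (rule aff_dim_geq)
      hence "nat (aff_dim (C \<inter> H) + 1) < n" using lt less(2) by linarith
      moreover have "convex (C \<inter> H)" unfolding H_def using less(3) convex_hyperplane convex_Int by blast
      ultimately have "y \<in> C \<inter> H"
        using less(1)[of _ "C \<inter> H" "B \<inter> H"] less(3,4,5) BHb em less(7,9) by blast
      thus False using yC by blast
    qed
  qed
qed

lemma barycenter_eq:
  fixes M :: "'a::euclidean_space measure"
  assumes "has_barycenter M y" shows "barycenter M = y"
  unfolding barycenter_def
proof (rule the_equality)
  fix z assume "has_barycenter M z"
  hence "\<And>a. a \<bullet> z = a \<bullet> y" using assms unfolding has_barycenter_def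
    using bounded_linear_inner_right by metis
  from this[of "z - y"] have "(z - y) \<bullet> (z - y) = 0" by (simp add: inner_diff_right)
  thus "z = y" by simp
qed (fact assms)

lemma choquet_set_convex:
  fixes C :: "'a::euclidean_space set"
  assumes "choquet_set C" shows "convex C"
  unfolding convex_def
proof (intro ballI allI impI)
  fix x y u v assume xy: "x \<in> C" "y \<in> C" and uv: "0 \<le> u" "0 \<le> v" "u + v = (1::real)"
  define f where "f = (\<lambda>b. if b then x else y)"
  define M where "M = distr (measure_pmf (bernoulli_pmf u)) borel f"
  have fm: "f \<in> measure_pmf (bernoulli_pmf u) \<rightarrow>\<^sub>M borel" by simp
  have u1: "u \<le> 1" using uv by simp
  have sM: "sets M = sets borel" unfolding M_def by simp
  have spM: "space M = UNIV" unfolding M_def by simp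
  have em1: "emeasure M (space M) = 1" unfolding M_def
    by (simp add: emeasure_distr fm measure_pmf.emeasure_space_1)
  have B: "{x, y} \<in> sets borel" by (simp add: closed_insert borel_closed)
  have emB: "emeasure M {x, y} = 1" unfolding M_def
  proof -
    have "f -` {x, y} \<inter> space (measure_pmf (bernoulli_pmf u)) = space (measure_pmf (bernoulli_pmf u))"
      unfolding f_def by auto
    thus "emeasure (distr (measure_pmf (bernoulli_pmf u)) borel f) {x, y} = 1"
      by (simp add: emeasure_distr fm B measure_pmf.emeasure_space_1)
  qed
  have reg: "regular_measure M"
    unfolding regular_measure_def
  proof (intro ballI conjI)
    fix B :: "'a set" assume "B \<in> sets borel"
    note r = inner_regular[OF sM _ this] outer_regular[OF sM _ this]
    have "emeasure M (space M) \<noteq> \<infinity>" using em1 by simp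
    from r[OF this] show "emeasure M B = (SUP K\<in>{K. compact K \<and> K \<subseteq> B}. emeasure M K)"
      "emeasure M B = (INF U\<in>{U. open U \<and> B \<subseteq> U}. emeasure M U)"
      by (simp_all add: conj_commute)
  qed
  have hb: "has_barycenter M (u *\<^sub>R x + v *\<^sub>R y)"
    unfolding has_barycenter_def
  proof (intro allI impI conjI)
    fix L :: "'a \<Rightarrow> real" assume L: "bounded_linear L"
    have Lm: "L \<in> borel_measurable borel" using L
      by (simp add: borel_measurable_continuous_onI linear_continuous_on)
    show "integrable M L" unfolding M_def
      by (subst integrable_distr_eq[OF fm Lm]) (rule integrable_measure_pmf_finite, simp)
    have "(\<integral>z. L z \<partial>M) = (\<integral>b. L (f b) \<partial>measure_pmf (bernoulli_pmf u))"
      unfolding M_def by (rule integral_distr[OF fm Lm])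
    also have "\<dots> = L x * u + L y * (1 - u)" using uv u1 by (simp add: f_def)
    also have "\<dots> = L (u *\<^sub>R x + v *\<^sub>R y)"
    proof -
      have v: "v = 1 - u" using uv by simp
      have "L (u *\<^sub>R x + v *\<^sub>R y) = u * L x + v * L y"
        using bounded_linear.linear[OF L] by (simp add: linear_add linear_scale)
      thus ?thesis unfolding v by (simp add: algebra_simps)
    qed
    finally show "L (u *\<^sub>R x + v *\<^sub>R y) = (\<integral>z. L z \<partial>M)" by simp
  qed
  have "M \<in> choquet_measures C" unfolding choquet_measures_def
    using sM em1 reg B emB hb xy by (simp only: mem_Collect_eq) (intro conjI bexI[of _ "{x,y}"] exI[of _ "u *\<^sub>R x + v *\<^sub>R y"], auto)
  with assms have "barycenter M \<in> C" unfolding choquet_set_def by blast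
  thus "u *\<^sub>R x + v *\<^sub>R y \<in> C" using barycenter_eq[OF hb] by simp
qed

lemma convex_choquet_set:
  fixes C :: "'a::euclidean_space set"
  assumes "convex C" shows "choquet_set C"
  unfolding choquet_set_def
proof (intro ballI)
  fix M assume "M \<in> choquet_measures C"
  hence M0: "sets M = sets borel" "emeasure M (space M) = 1"
    "\<exists>B\<in>sets borel. B \<subseteq> C \<and> emeasure M B = 1" "\<exists>y. has_barycenter M y"
    unfolding choquet_measures_def by simp_all
  from M0(3) obtain B where B: "B \<in> sets borel" "B \<subseteq> C" "emeasure M B = 1" by (elim bexE conjE) simp
  from M0(4) obtain y where y: "has_barycenter M y" by (elim exE)
  have "y \<in> C" by (rule bary_in_convex_aux[OF refl assms M0(1,2) B y])
  thus "barycenter M \<in> C" using barycenter_eq[OF y] by simp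
qed

theorem mainTheorem3:
  fixes A :: "('a::euclidean_space) set"
  shows "choquet_hull A = convex hull A"
proof
  have "convex hull A \<in> {C. choquet_set C \<and> A \<subseteq> C}"
    using convex_choquet_set[OF convex_convex_hull[of A]] hull_subset[of A convex] by simp
  thus "choquet_hull A \<subseteq> convex hull A" unfolding choquet_hull_def by (rule Inter_lower)
  show "convex hull A \<subseteq> choquet_hull A" unfolding choquet_hull_def
  proof (rule Inter_greatest)
    fix C assume "C \<in> {C. choquet_set C \<and> A \<subseteq> C}"
    hence "choquet_set C" "A \<subseteq> C" by simp_all
    have "convex C" using \<open>choquet_set C\<close> by (rule choquet_set_convex)
    thus "convex hull A \<subseteq> C" using \<open>A \<subseteq> C\<close> by (intro hull_minimal)
  qed
qed

end
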